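(* The following two assertions are equivalent. (T) For every admissible index $\mathbf{k}=(k_1,\ldots,k_n)$ with dual index $\mathbf{k}'$, every integer $l\ge0$ and every $\alpha$ with $\mathrm{Re}\,\alpha>0$, $S_l(\mathbf{k};\alpha)=S_l(\mathbf{k}';\alpha)$. (P) For every admissible index $\mathbf{k}=(k_1,\ldots,k_n)$ with dual index $\mathbf{k}'=(k'_1,\ldots,k'_{n'})$, every integer $l\ge0$ and every $\alpha$ with $\mathrm{Re}\,\alpha>0$, \[ \sum_{i=0}^{l}\sum_{\substack{i_1+\cdots+i_{n-1}=i\\ i_j\in\mathbb{Z}_{\ge0}}}S_{l-i}(k_1,\{1\}^{i_1},k_2,\ldots,k_{n-1},\{1\}^{i_{n-1}},k_n;\alpha) =\sum_{i=0}^{l}\sum_{\mathbf{i}^{(1)}_{k'_1-1}+\cdots+\mathbf{i}^{(n')}_{k'_{n'}-2}=i}S_{l-i}\bigl(k'_1+\mathbf{i}^{(1)}_{k'_1-1},\ldots,k'_{n'-1}+\mathbf{i}^{(n'-1)}_{k'_{n'-1}-1},k'_{n'}+\mathbf{i}^{(n')}_{k'_{n'}-2};\alpha\bigr). \]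
   Context: An index $(k_1,\ldots,k_n)$ is admissible if all $k_i$ are positive integers and $k_n\ge2$. For $a\in\mathbb{C}$, $(a)_0=1$ and $(a)_m=a(a+1)\cdots(a+m-1)$ for $m\ge1$. For an admissible index and $\mathrm{Re}\,\alpha>0$, \[ Z(\mathbf{k};\alpha)=\sum_{0\le m_1<\cdots<m_n}\frac{(\alpha)_{m_1}}{m_1!}\frac{m_n!}{(\alpha)_{m_n+1}}\frac{1}{(m_1+\alpha)^{k_1}\cdots(m_{n-1}+\alpha)^{k_{n-1}}(m_n+\alpha)^{k_n-1}}, \] and $S_l(\mathbf{k};\alpha):=\sum_{l_1+\cdots+l_n=l,\ l_i\in\mathbb{Z}_{\ge0}}Z(k_1+l_1,\ldots,k_n+l_n;\alpha)$. $\{1\}^a$ denotes $a$ consecutive entries equal to $1$. Every admissible index can be written uniquely as $(\{1\}^{a_1},b_1+2,\ldots,\{1\}^{a_s},b_s+2)$ with $a_j,b_j\in\mathbb{Z}_{\ge0}$; its dual index is $(\{1\}^{b_s},a_s+2,\ldots,\{1\}^{b_1},a_1+2)$. For $m\ge1$, $r\ge0$, $\mathbf{i}^{(m)}_r:=i^{(m)}_1+\cdots+i^{(m)}_r$ (equal to $0$ if $r=0$); the sum over $\mathbf{i}^{(1)}_{k'_1-1}+\cdots+\mathbf{i}^{(n')}_{k'_{n'}-2}=i$ runs over all tuples of nonnegative integers $(i^{(1)}_1,\ldots,i^{(1)}_{k'_1-1},\ldots,i^{(n')}_1,\ldots,i^{(n')}_{k'_{n'}-2})$ with total sum $i$. 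*)

theory Defs
  imports "HOL-Analysis.Analysis"
begin

definition admissible :: "nat list \<Rightarrow> bool" where
  "admissible ks \<longleftrightarrow> ks \<noteq> [] \<and> (\<forall>k\<in>set ks. k \<ge> 1) \<and> last ks \<ge> 2"

definition Zterm :: "nat list \<Rightarrow> complex \<Rightarrow> nat list \<Rightarrow> complex" where
  "Zterm ks \<alpha> ms =
     pochhammer \<alpha> (hd ms) / fact (hd ms) * (fact (last ms) / pochhammer \<alpha> (last ms + 1))
     / ((\<Prod>j<length ks - 1. (of_nat (ms ! j) + \<alpha>) ^ (ks ! j))
        * (of_nat (last ms) + \<alpha>) ^ (last ks - 1))"

definition Z :: "nat list \<Rightarrow> complex \<Rightarrow> complex" where
  "Z ks \<alpha> = infsum (Zterm ks \<alpha>) {ms. length ms = length ks \<and> sorted_wrt (<) ms}"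

definition S :: "nat \<Rightarrow> nat list \<Rightarrow> complex \<Rightarrow> complex" where
  "S l ks \<alpha> = (\<Sum>ls\<in>{ls. length ls = length ks \<and> sum_list ls = l}. Z (map2 (+) ks ls) \<alpha>)"

definition blocks_to_index :: "(nat \<times> nat) list \<Rightarrow> nat list" where
  "blocks_to_index ps = concat (map (\<lambda>(a, b). replicate a 1 @ [b + 2]) ps)"

definition dual :: "nat list \<Rightarrow> nat list" where
  "dual ks = blocks_to_index (rev (map prod.swap (THE ps. blocks_to_index ps = ks)))"

definition insert_ones :: "nat list \<Rightarrow> nat list \<Rightarrow> nat list" where
  "insert_ones ks is =
     concat (map (\<lambda>j. ks ! j # replicate (is ! j) 1) [0..<length ks - 1]) @ [last ks]"

definition P_lhs :: "nat \<Rightarrow> nat list \<Rightarrow> complex \<Rightarrow> complex" where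
  "P_lhs l ks \<alpha> = (\<Sum>i=0..l. \<Sum>is\<in>{is. length is = length ks - 1 \<and> sum_list is = i}.
                      S (l - i) (insert_ones ks is) \<alpha>)"

definition blocks_len :: "nat list \<Rightarrow> nat \<Rightarrow> nat" where
  "blocks_len kd m = (if m = length kd - 1 then kd ! m - 2 else kd ! m - 1)"

definition P_rhs :: "nat \<Rightarrow> nat list \<Rightarrow> complex \<Rightarrow> complex" where
  "P_rhs l kd \<alpha> = (\<Sum>i=0..l. \<Sum>iss\<in>{iss. length iss = length kd
                        \<and> (\<forall>m<length kd. length (iss ! m) = blocks_len kd m)
                        \<and> sum_list (map sum_list iss) = i}.
                      S (l - i) (map (\<lambda>m. kd ! m + sum_list (iss ! m)) [0..<length kd]) \<alpha>)"

end

theory Submission imports Defs begin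

lemma bti_Nil[simp]: "blocks_to_index [] = []"
  by (simp add: blocks_to_index_def)
lemma bti_Cons[simp]: "blocks_to_index (p # ps) = replicate (fst p) 1 @ (snd p + 2) # blocks_to_index ps"
  by (simp add: blocks_to_index_def case_prod_beta)
lemma bti_append: "blocks_to_index (xs @ ys) = blocks_to_index xs @ blocks_to_index ys"
  by (simp add: blocks_to_index_def)

lemma rep_eq: "replicate a (1::nat) @ (b+2) # X = replicate c 1 @ (d+2) # Y \<Longrightarrow> a = c \<and> b = d \<and> X = Y"
proof (induction a arbitrary: c)
  case 0 thus ?case by (cases c) auto
next
  case (Suc a)
  show ?case
  proof (cases c)
    case 0 with Suc.prems show ?thesis by simp
  next
    case (Suc c') with Suc.prems Suc.IH[of c'] show ?thesis by simp
  qed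
qed

lemma bti_inj: "blocks_to_index ps = blocks_to_index qs \<Longrightarrow> ps = qs"
proof (induction ps arbitrary: qs)
  case Nil thus ?case by (cases qs) auto
next
  case (Cons p ps)
  show ?case
  proof (cases qs)
    case Nil with Cons.prems show ?thesis by simp
  next
    case (Cons q qs')
    have h: "replicate (fst p) 1 @ (snd p + 2) # blocks_to_index ps
           = replicate (fst q) 1 @ (snd q + 2) # blocks_to_index qs'"
      using Cons.prems unfolding Cons bti_Cons .
    from rep_eq[OF h] have "fst p = fst q" "snd p = snd q" "blocks_to_index ps = blocks_to_index qs'"
      by auto
    with Cons.IH Cons show ?thesis by (simp add: prod_eq_iff)
  qed
qed

lemma bti_ex: "(\<forall>k\<in>set ks. k \<ge> 1) \<Longrightarrow> (ks \<noteq> [] \<longrightarrow> last ks \<ge> 2) \<Longrightarrow> \<exists>ps. blocks_to_index ps = ks"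
proof (induction ks)
  case Nil thus ?case by (intro exI[of _ "[]"]) simp
next
  case (Cons x xs)
  show ?case
  proof (cases "xs = []")
    case True
    with Cons.prems show ?thesis by (intro exI[of _ "[(0, x - 2)]"]) auto
  next
    case False
    with Cons obtain ps' where ps': "blocks_to_index ps' = xs" by auto
    with False obtain p r where pr: "ps' = p # r" by (cases ps') auto
    show ?thesis
    proof (cases "x \<ge> 2")
      case True thus ?thesis using ps' by (intro exI[of _ "(0, x-2) # ps'"]) auto
    next
      case False
      with Cons.prems have "x = 1" by auto
      thus ?thesis using ps' pr by (intro exI[of _ "(Suc (fst p), snd p) # r"]) auto
    qed
  qed
qed

lemma dual_bti: "dual (blocks_to_index ps) = blocks_to_index (rev (map prod.swap ps))"
proof -
  have "(THE qs. blocks_to_index qs = blocks_to_index ps) = ps"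
    by (rule the_equality) (auto dest: bti_inj)
  thus ?thesis by (simp add: dual_def)
qed

lemma adm_bti: "ps \<noteq> [] \<Longrightarrow> admissible (blocks_to_index ps)"
proof -
  assume "ps \<noteq> []"
  then obtain r p where "ps = r @ [p]" by (cases ps rule: rev_cases) auto
  moreover have "\<forall>k\<in>set (blocks_to_index qs). k \<ge> 1" for qs
    by (induction qs) auto
  ultimately show ?thesis unfolding admissible_def by (auto simp: bti_append)
qed

definition ins' :: "nat list \<Rightarrow> nat list \<Rightarrow> nat list" where
  "ins' xs is = concat (map2 (\<lambda>i x. replicate i 1 @ [x]) is xs)"

lemma ins'_Cons: "ins' (x # xs) (i # is) = replicate i 1 @ x # ins' xs is"
  by (simp add: ins'_def)

lemma ins'_Nil: "ins' [] [] = []"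
  by (simp add: ins'_def)

lemma regroup: "length xs = length is \<Longrightarrow>
  concat (map2 (\<lambda>k i. k # replicate i 1) xs is) @ [y] = hd (xs @ [y]) # ins' (tl (xs @ [y])) is"
proof (induction xs "is" rule: list_induct2)
  case Nil thus ?case by (simp add: ins'_Nil)
next
  case (Cons x xs i "is")
  have e: "xs @ [y] = hd (xs @ [y]) # tl (xs @ [y])" by simp
  have "concat (map2 (\<lambda>k i. k # replicate i 1) (x # xs) (i # is)) @ [y]
      = x # replicate i 1 @ (concat (map2 (\<lambda>k i. k # replicate i 1) xs is) @ [y])" by simp
  also have "\<dots> = x # replicate i 1 @ hd (xs @ [y]) # ins' (tl (xs @ [y])) is" using Cons.IH by simp
  also have "\<dots> = x # ins' (hd (xs @ [y]) # tl (xs @ [y])) (i # is)" by (simp only: ins'_Cons)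
  also have "\<dots> = hd ((x # xs) @ [y]) # ins' (tl ((x # xs) @ [y])) (i # is)" by (metis e append_Cons list.sel(1) list.sel(3))
  finally show ?case .
qed

lemma insert_ones_alt: "ks \<noteq> [] \<Longrightarrow> length is = length ks - 1 \<Longrightarrow> insert_ones ks is = hd ks # ins' (tl ks) is"
proof -
  assume ne: "ks \<noteq> []" and len: "length is = length ks - 1"
  have "map (\<lambda>j. ks ! j # replicate (is ! j) 1) [0..<length ks - 1] = map2 (\<lambda>k i. k # replicate i 1) (butlast ks) is"
    by (rule nth_equalityI) (use len in \<open>auto simp: nth_butlast\<close>)
  hence "insert_ones ks is = concat (map2 (\<lambda>k i. k # replicate i 1) (butlast ks) is) @ [last ks]"
    by (simp add: insert_ones_def)
  also have "\<dots> = hd (butlast ks @ [last ks]) # ins' (tl (butlast ks @ [last ks])) is"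
    by (rule regroup) (use len in simp)
  finally show ?thesis using ne by simp
qed

lemma ins'_append: "length is1 = length xs1 \<Longrightarrow> ins' (xs1 @ xs2) (is1 @ is2) = ins' xs1 is1 @ ins' xs2 is2"
  by (simp add: ins'_def zip_append)

lemma ins'_block: "length g = Suc a \<Longrightarrow> ins' (replicate a 1 @ [c]) g = replicate (a + sum_list g) 1 @ [c]"
proof (induction a arbitrary: g)
  case 0 thus ?case by (cases g) (auto simp: ins'_def)
next
  case (Suc a)
  then obtain i g' where g: "g = i # g'" by (cases g) auto
  with Suc have "ins' (replicate a 1 @ [c]) g' = replicate (a + sum_list g') 1 @ [c]" by simp
  hence "ins' (replicate (Suc a) 1 @ [c]) g = replicate i 1 @ 1 # replicate (a + sum_list g') 1 @ [c]"
    by (simp add: g ins'_def)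
  also have "\<dots> = replicate (Suc a + sum_list g) 1 @ [c]"
    by (simp add: g replicate_add[symmetric] replicate_app_Cons_same)
  finally show ?case .
qed


lemma len_bti: "length (blocks_to_index ps) = sum_list (map (\<lambda>p. Suc (fst p)) ps)"
  by (induction ps) auto

lemma len_concat: "list_all2 (\<lambda>g p. length g = Suc (fst p)) G ps \<Longrightarrow> length (concat G) = length (blocks_to_index ps)"
  by (induction G ps rule: list_all2_induct) auto

lemma ins'_bti: "list_all2 (\<lambda>g p. length g = Suc (fst p)) G ps \<Longrightarrow>
   ins' (blocks_to_index ps) (concat G) = blocks_to_index (map2 (\<lambda>p g. (fst p + sum_list g, snd p)) ps G)"
proof (induction G ps rule: list_all2_induct)
  case Nil thus ?case by (simp add: ins'_def)
next
  case (Cons g G p ps)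
  have "ins' (blocks_to_index (p # ps)) (concat (g # G))
     = ins' ((replicate (fst p) 1 @ [snd p + 2]) @ blocks_to_index ps) (g @ concat G)" by simp
  also have "\<dots> = ins' (replicate (fst p) 1 @ [snd p + 2]) g @ ins' (blocks_to_index ps) (concat G)"
    using Cons.hyps(1) by (intro ins'_append) simp
  also have "\<dots> = (replicate (fst p + sum_list g) 1 @ [snd p + 2]) @ blocks_to_index (map2 (\<lambda>p g. (fst p + sum_list g, snd p)) ps G)"
    by (simp only: ins'_block[OF Cons.hyps(1)] Cons.IH)
  finally show ?case by simp
qed

definition Fb :: "nat \<times> nat \<Rightarrow> nat list \<Rightarrow> nat \<times> nat" where
  "Fb p g = (fst p + sum_list g, snd p)"

lemma insert_ones_bti:
  assumes "length g = a" "list_all2 (\<lambda>g p. length g = Suc (fst p)) G qs"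
  shows "insert_ones (blocks_to_index ((a,b) # qs)) (concat (g # G)) = blocks_to_index (map2 Fb ((a,b) # qs) (g # G))"
proof -
  have ne: "blocks_to_index ((a,b) # qs) \<noteq> []" by simp
  have len: "length (concat (g # G)) = length (blocks_to_index ((a,b) # qs)) - 1"
    using assms len_concat[OF assms(2)] by simp
  show ?thesis
  proof (cases a)
    case 0
    with assms have g: "g = []" by simp
    show ?thesis
      unfolding insert_ones_alt[OF ne len] using 0 g ins'_bti[OF assms(2)] by (simp add: Fb_def)
  next
    case (Suc a')
    have tl: "tl (blocks_to_index ((a,b) # qs)) = blocks_to_index ((a',b) # qs)" using Suc by simp
    have hd: "hd (blocks_to_index ((a,b) # qs)) = 1" using Suc by simp
    have all: "list_all2 (\<lambda>g p. length g = Suc (fst p)) (g # G) ((a',b) # qs)"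
      using assms Suc by simp
    show ?thesis
      unfolding insert_ones_alt[OF ne len] tl hd ins'_bti[OF all] using Suc by (simp add: Fb_def)
  qed
qed

definition rhsmap :: "nat list \<Rightarrow> nat list list \<Rightarrow> nat list" where
  "rhsmap kd iss = map (\<lambda>m. kd ! m + sum_list (iss ! m)) [0..<length kd]"

lemma rhsmap_eq: "length iss = length kd \<Longrightarrow> rhsmap kd iss = map2 (\<lambda>k g. k + sum_list g) kd iss"
  by (rule nth_equalityI) (auto simp: rhsmap_def)

definition psiB :: "(nat \<times> nat) list \<Rightarrow> nat list list \<Rightarrow> nat list list" where
  "psiB Q G = concat (map2 (\<lambda>q g. replicate (fst q) [] @ [g]) Q G)"

lemma len_psiB: "length Q = length G \<Longrightarrow> length (psiB Q G) = length (blocks_to_index Q)"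
  by (induction Q G rule: list_induct2) (auto simp: psiB_def)

lemma map2_psiB: "length Q = length G \<Longrightarrow>
  map2 (\<lambda>k g. k + sum_list g) (blocks_to_index Q) (psiB Q G) = blocks_to_index (map2 (\<lambda>q g. (fst q, snd q + sum_list g)) Q G)"
proof (induction Q G rule: list_induct2)
  case Nil thus ?case by (simp add: psiB_def)
next
  case (Cons q Q g G)
  have "map2 (\<lambda>k g. k + sum_list g) (blocks_to_index (q # Q)) (psiB (q # Q) (g # G))
     = map2 (\<lambda>k g. k + sum_list g) ((replicate (fst q) 1 @ [snd q + 2]) @ blocks_to_index Q) ((replicate (fst q) [] @ [g]) @ psiB Q G)"
    by (simp add: psiB_def)
  also have "\<dots> = map2 (\<lambda>k g. k + sum_list g) (replicate (fst q) 1 @ [snd q + 2]) (replicate (fst q) [] @ [g])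
        @ map2 (\<lambda>k g. k + sum_list g) (blocks_to_index Q) (psiB Q G)"
    by (simp add: zip_append)
  also have "\<dots> = (replicate (fst q) 1 @ [snd q + 2 + sum_list g]) @ blocks_to_index (map2 (\<lambda>q g. (fst q, snd q + sum_list g)) Q G)"
    using Cons.IH by (simp add: zip_append)
  finally show ?case by simp
qed


lemma concat_inj: "list_all2 (\<lambda>g L. length g = L) G Ls \<Longrightarrow> list_all2 (\<lambda>g L. length g = L) G' Ls
   \<Longrightarrow> concat G = concat G' \<Longrightarrow> G = G'"
proof (induction Ls arbitrary: G G')
  case Nil thus ?case by simp
next
  case (Cons L Ls)
  obtain g H where G: "G = g # H" "length g = L" "list_all2 (\<lambda>g L. length g = L) H Ls"
    using Cons.prems(1) by (cases G) auto
  obtain g' H' where G': "G' = g' # H'" "length g' = L" "list_all2 (\<lambda>g L. length g = L) H' Ls"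
    using Cons.prems(2) by (cases G') auto
  from Cons.prems(3) G G' have "g @ concat H = g' @ concat H'" by simp
  with G G' have "g = g'" "concat H = concat H'" by auto
  with Cons.IH G G' show ?case by auto
qed

lemma concat_img: "concat ` {G. list_all2 (\<lambda>g L. length g = L) G Ls} = {xs. length xs = sum_list Ls}"
proof (intro set_eqI iffI)
  fix xs assume "xs \<in> concat ` {G. list_all2 (\<lambda>g L. length g = L) G Ls}"
  then obtain G where "list_all2 (\<lambda>g L. length g = L) G Ls" "xs = concat G" by auto
  thus "xs \<in> {xs. length xs = sum_list Ls}"
    by (induction G Ls arbitrary: xs rule: list_all2_induct) auto
next
  fix xs assume "xs \<in> {xs. length xs = sum_list Ls}"
  hence "length xs = sum_list Ls" by simp
  thus "xs \<in> concat ` {G. list_all2 (\<lambda>g L. length g = L) G Ls}"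
  proof (induction Ls arbitrary: xs)
    case Nil thus ?case by (auto intro!: image_eqI[of _ _ "[]"])
  next
    case (Cons L Ls)
    hence "length (drop L xs) = sum_list Ls" by simp
    hence "drop L xs \<in> concat ` {G. list_all2 (\<lambda>g L. length g = L) G Ls}" by (rule Cons.IH)
    then obtain H where H: "list_all2 (\<lambda>g L. length g = L) H Ls" "drop L xs = concat H" by auto
    have "xs = take L xs @ concat H" using H(2) by (metis append_take_drop_id)
    hence "xs = concat (take L xs # H)" by simp
    moreover have "list_all2 (\<lambda>g L. length g = L) (take L xs # H) (L # Ls)" using H Cons.prems by simp
    ultimately show ?case by blast
  qed
qed

lemma sum_list_concat_nat: "sum_list (concat (xs :: nat list list)) = sum_list (map sum_list xs)"
  by (induction xs) auto

lemma sum_psiB: "length Q = length G \<Longrightarrow> sum_list (map sum_list (psiB Q G)) = sum_list (map sum_list G)"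
  by (induction Q G rule: list_induct2) (auto simp: psiB_def)

lemma psiB_Cons: "psiB (q # Q) (g # G) = replicate (fst q) [] @ g # psiB Q G"
  by (simp add: psiB_def)

lemma psiB_inj: "length Q = length Ls \<Longrightarrow> list_all2 (\<lambda>g L. length g = L) G Ls \<Longrightarrow> list_all2 (\<lambda>g L. length g = L) G' Ls
   \<Longrightarrow> psiB Q G = psiB Q G' \<Longrightarrow> G = G'"
proof (induction Q Ls arbitrary: G G' rule: list_induct2)
  case Nil thus ?case by simp
next
  case (Cons q Q L Ls)
  obtain g H where G: "G = g # H" "list_all2 (\<lambda>g L. length g = L) H Ls"
    using Cons.prems(1) by (cases G) auto
  obtain g' H' where G': "G' = g' # H'" "list_all2 (\<lambda>g L. length g = L) H' Ls"
    using Cons.prems(2) by (cases G') auto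
  from Cons.prems(3) G G' have "g = g'" "psiB Q H = psiB Q H'" by (auto simp: psiB_Cons)
  with Cons.IH G G' show ?case by auto
qed

lemma list_all2_zero: "list_all2 (\<lambda>g L. length g = L) us (replicate b 0) \<Longrightarrow> us = replicate b []"
  by (rule nth_equalityI) (auto simp: list_all2_conv_all_nth)

lemma psiB_img: "length Q = length Ls \<Longrightarrow>
  psiB Q ` {G. list_all2 (\<lambda>g L. length g = L) G Ls}
    = {iss :: nat list list. list_all2 (\<lambda>g L. length g = L) iss (concat (map2 (\<lambda>q L. replicate (fst q) 0 @ [L]) Q Ls))}"
proof (induction Q Ls rule: list_induct2)
  case Nil thus ?case by (auto simp: psiB_def intro!: image_eqI[of _ _ "[]"])
next
  case (Cons q Q L Ls)
  let ?P = "\<lambda>(g::nat list) L. length g = L"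
  let ?pat = "concat (map2 (\<lambda>q L. replicate (fst q) 0 @ [L]) Q Ls)"
  show ?case
  proof (intro set_eqI iffI)
    fix iss assume "iss \<in> psiB (q # Q) ` {G. list_all2 ?P G (L # Ls)}"
    then obtain g H where "length g = L" "list_all2 ?P H Ls" "iss = psiB (q # Q) (g # H)"
      by (auto simp: list_all2_Cons2)
    moreover have "psiB Q H \<in> {iss. list_all2 ?P iss ?pat}"
      using Cons.IH \<open>list_all2 ?P H Ls\<close> by blast
    ultimately show "iss \<in> {iss. list_all2 ?P iss (concat (map2 (\<lambda>q L. replicate (fst q) 0 @ [L]) (q # Q) (L # Ls)))}"
    proof -
      have r: "list_all2 ?P (replicate (fst q) []) (replicate (fst q) 0)"
        by (simp add: list_all2_conv_all_nth)
      assume a: "length g = L" "list_all2 ?P H Ls" "iss = psiB (q # Q) (g # H)"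
        "psiB Q H \<in> {iss. list_all2 ?P iss ?pat}"
      have "list_all2 ?P (replicate (fst q) [] @ g # psiB Q H) (replicate (fst q) 0 @ L # ?pat)"
        using a by (intro list_all2_appendI r) auto
      thus ?thesis using a by (simp add: psiB_Cons)
    qed
  next
    fix iss assume "iss \<in> {iss. list_all2 ?P iss (concat (map2 (\<lambda>q L. replicate (fst q) 0 @ [L]) (q # Q) (L # Ls)))}"
    hence "list_all2 ?P iss (replicate (fst q) 0 @ L # ?pat)" by simp
    then obtain us vs where uv: "iss = us @ vs" "list_all2 ?P us (replicate (fst q) 0)" "list_all2 ?P vs (L # ?pat)"
      unfolding list_all2_append2 by blast
    from uv(3) obtain g ws where gw: "vs = g # ws" "length g = L" "list_all2 ?P ws ?pat"
      by (auto simp: list_all2_Cons2)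
    from gw(3) Cons.IH obtain H where H: "list_all2 ?P H Ls" "ws = psiB Q H" by auto
    have "iss = psiB (q # Q) (g # H)" using uv gw H list_all2_zero[OF uv(2)] by (simp add: psiB_Cons)
    moreover have "list_all2 ?P (g # H) (L # Ls)" using gw H by simp
    ultimately show "iss \<in> psiB (q # Q) ` {G. list_all2 ?P G (L # Ls)}" by blast
  qed
qed

lemma blen: "kd \<noteq> [] \<Longrightarrow> map (blocks_len kd) [0..<length kd] = map (\<lambda>k. k - 1) (butlast kd) @ [last kd - 2]"
  by (rule nth_equalityI) (auto simp: blocks_len_def nth_append nth_butlast last_conv_nth)

lemma minus1_bti: "map (\<lambda>k. k - 1) (blocks_to_index Q) = concat (map2 (\<lambda>q L. replicate (fst q) 0 @ [L]) Q (map (\<lambda>q. Suc (snd q)) Q))"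
  by (induction Q) auto


lemma map2_rev_swap: "length xs = length ys \<Longrightarrow>
  map2 (\<lambda>q g. (fst q, snd q + sum_list g)) (rev (map prod.swap xs)) (rev ys) = rev (map prod.swap (map2 Fb xs ys))"
  by (induction xs ys rule: list_induct2) (auto simp: Fb_def zip_append)

lemma key:
  assumes "admissible ks"
  obtains phiA and CA :: "nat list list set" and phiB where
   "inj_on phiA CA" "phiA ` CA = {is. length is = length ks - 1}"
   "inj_on phiB CA"
   "phiB ` CA = {iss. length iss = length (dual ks) \<and> (\<forall>m<length (dual ks). length (iss!m) = blocks_len (dual ks) m)}"
   "\<And>G. G \<in> CA \<Longrightarrow> sum_list (map sum_list (phiB G)) = sum_list (phiA G)"
   "\<And>G. G \<in> CA \<Longrightarrow> admissible (insert_ones ks (phiA G)) \<and> dual (insert_ones ks (phiA G)) = rhsmap (dual ks) (phiB G)"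
proof -
  from assms obtain ps where ps: "blocks_to_index ps = ks"
    using bti_ex unfolding admissible_def by blast
  from assms ps obtain a1 b1 qs where ps1: "ps = (a1, b1) # qs"
    unfolding admissible_def by (cases ps) auto
  let ?P = "\<lambda>(g::nat list) L. length g = L"
  define Lp where "Lp = a1 # map (\<lambda>p. Suc (fst p)) qs"
  define CA where "CA = {G. list_all2 ?P G Lp}"
  define Q where "Q = rev (map prod.swap ps)"
  define phiB where "phiB = (\<lambda>G. psiB Q (rev G))"
  have kd: "dual ks = blocks_to_index Q" unfolding Q_def ps[symmetric] by (rule dual_bti)
  have lenQ: "length Q = length (rev Lp)" by (simp add: Q_def Lp_def ps1)
  have lenks: "length ks - 1 = sum_list Lp" unfolding ps[symmetric] ps1 Lp_def len_bti by simp
  have c1: "inj_on concat CA" unfolding CA_def inj_on_def using concat_inj by blast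
  have c2: "concat ` CA = {is. length is = length ks - 1}" unfolding CA_def lenks by (rule concat_img)
  have revCA: "rev ` CA = {G. list_all2 ?P G (rev Lp)}"
  proof (intro set_eqI iffI)
    fix G assume "G \<in> rev ` CA" thus "G \<in> {G. list_all2 ?P G (rev Lp)}" by (auto simp: CA_def)
  next
    fix G assume "G \<in> {G. list_all2 ?P G (rev Lp)}"
    hence "rev G \<in> CA" unfolding CA_def by (simp add: list_all2_rev1)
    thus "G \<in> rev ` CA" by (metis image_eqI rev_rev_ident)
  qed
  have c3: "inj_on phiB CA"
  proof (rule inj_onI)
    fix G G' assume "G \<in> CA" "G' \<in> CA" "phiB G = phiB G'"
    hence "rev G = rev G'" using psiB_inj[OF lenQ, of "rev G" "rev G'"] unfolding phiB_def CA_def by simp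
    thus "G = G'" by simp
  qed
  have pat: "concat (map2 (\<lambda>q L. replicate (fst q) 0 @ [L]) Q (rev Lp)) = map (blocks_len (dual ks)) [0..<length (dual ks)]"
  proof -
    define Q' where "Q' = rev (map prod.swap qs)"
    have Q: "Q = Q' @ [(b1, a1)]" by (simp add: Q_def Q'_def ps1)
    have L: "rev Lp = map (\<lambda>q. Suc (snd q)) Q' @ [a1]" by (simp add: Lp_def Q'_def rev_map)
    have kd2: "dual ks = blocks_to_index Q' @ replicate b1 1 @ [a1 + 2]" using kd Q by (simp add: bti_append)
    have "concat (map2 (\<lambda>q L. replicate (fst q) 0 @ [L]) Q (rev Lp))
        = concat (map2 (\<lambda>q L. replicate (fst q) 0 @ [L]) Q' (map (\<lambda>q. Suc (snd q)) Q')) @ replicate b1 0 @ [a1]"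
      unfolding Q L by (simp add: zip_append)
    also have "\<dots> = map (\<lambda>k. k - 1) (blocks_to_index Q') @ replicate b1 0 @ [a1]"
      by (simp only: minus1_bti)
    also have "\<dots> = map (\<lambda>k. k - 1) (butlast (dual ks)) @ [last (dual ks) - 2]"
      unfolding kd2 by (simp add: butlast_append)
    also have "\<dots> = map (blocks_len (dual ks)) [0..<length (dual ks)]"
      by (rule blen[symmetric]) (simp add: kd2)
    finally show ?thesis .
  qed
  have c4: "phiB ` CA = {iss. length iss = length (dual ks) \<and> (\<forall>m<length (dual ks). length (iss!m) = blocks_len (dual ks) m)}"
  proof -
    have "phiB ` CA = psiB Q ` (rev ` CA)" unfolding phiB_def by (simp add: image_image)
    also have "\<dots> = {iss. list_all2 ?P iss (map (blocks_len (dual ks)) [0..<length (dual ks)])}"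
      unfolding revCA psiB_img[OF lenQ] pat ..
    also have "\<dots> = {iss. length iss = length (dual ks) \<and> (\<forall>m<length (dual ks). length (iss!m) = blocks_len (dual ks) m)}"
      by (auto simp: list_all2_conv_all_nth)
    finally show ?thesis .
  qed
  have c5: "sum_list (map sum_list (phiB G)) = sum_list (concat G)" if "G \<in> CA" for G
  proof -
    from that have "length G = length Lp" unfolding CA_def by (simp add: list_all2_lengthD)
    hence "length Q = length (rev G)" using lenQ by simp
    thus ?thesis unfolding phiB_def by (simp add: sum_psiB sum_list_concat_nat rev_map[symmetric])
  qed
  have c6: "admissible (insert_ones ks (concat G)) \<and> dual (insert_ones ks (concat G)) = rhsmap (dual ks) (phiB G)"
    if "G \<in> CA" for G
  proof -
    from that obtain g H where G: "G = g # H" "length g = a1" "list_all2 ?P H (map (\<lambda>p. Suc (fst p)) qs)"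
      unfolding CA_def Lp_def by (auto simp: list_all2_Cons2)
    have H: "list_all2 (\<lambda>g p. length g = Suc (fst p)) H qs" using G(3) by (simp add: list_all2_map2)
    have lGp: "length ps = length G" using H G(1) ps1 by (simp add: list_all2_lengthD)
    have ins: "insert_ones ks (concat G) = blocks_to_index (map2 Fb ps G)"
      unfolding ps[symmetric] ps1 G(1) by (rule insert_ones_bti[OF G(2) H])
    have lenQG: "length Q = length (rev G)" using lGp by (simp add: Q_def)
    have "rhsmap (dual ks) (phiB G) = map2 (\<lambda>k g. k + sum_list g) (blocks_to_index Q) (psiB Q (rev G))"
      unfolding phiB_def kd by (rule rhsmap_eq) (simp add: len_psiB[OF lenQG])
    also have "\<dots> = blocks_to_index (map2 (\<lambda>q g. (fst q, snd q + sum_list g)) Q (rev G))"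
      by (rule map2_psiB[OF lenQG])
    also have "\<dots> = blocks_to_index (rev (map prod.swap (map2 Fb ps G)))"
      unfolding Q_def by (simp add: map2_rev_swap[OF lGp])
    also have "\<dots> = dual (insert_ones ks (concat G))" unfolding ins dual_bti ..
    finally have "dual (insert_ones ks (concat G)) = rhsmap (dual ks) (phiB G)" ..
    moreover have "admissible (insert_ones ks (concat G))" unfolding ins
      by (rule adm_bti) (simp add: ps1 G(1))
    ultimately show ?thesis by simp
  qed
  show ?thesis
    by (rule that[of concat CA phiB]) (use c1 c2 c3 c4 c5 c6 in auto)
qed


lemma reidx_sum:
  assumes "inj_on phi C" "phi ` C = X" "\<And>c. c \<in> C \<Longrightarrow> t (phi c) = tt c"
  shows "(\<Sum>x\<in>{x\<in>X. t x = i}. f x) = (\<Sum>c\<in>{c\<in>C. tt c = i}. f (phi c))"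
proof -
  have "{x\<in>X. t x = i} = phi ` {c\<in>C. tt c = i}" using assms(2,3) by auto
  moreover have "inj_on phi {c\<in>C. tt c = i}" using assms(1) by (rule inj_on_subset) auto
  ultimately show ?thesis by (simp add: sum.reindex)
qed

lemma sides:
  assumes "admissible ks"
  obtains phiA and C :: "nat list list set" and tot phiB where
   "\<And>(f :: nat list \<Rightarrow> complex) i. (\<Sum>is\<in>{is. length is = length ks - 1 \<and> sum_list is = i}. f (insert_ones ks is))
       = (\<Sum>G\<in>{G\<in>C. tot G = i}. f (insert_ones ks (phiA G)))"
   "\<And>(f :: nat list \<Rightarrow> complex) i. (\<Sum>iss\<in>{iss. length iss = length (dual ks)
                        \<and> (\<forall>m<length (dual ks). length (iss ! m) = blocks_len (dual ks) m)
                        \<and> sum_list (map sum_list iss) = i}. f (map (\<lambda>m. dual ks ! m + sum_list (iss ! m)) [0..<length (dual ks)]))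
       = (\<Sum>G\<in>{G\<in>C. tot G = i}. f (rhsmap (dual ks) (phiB G)))"
   "\<And>G. G \<in> C \<Longrightarrow> admissible (insert_ones ks (phiA G)) \<and> dual (insert_ones ks (phiA G)) = rhsmap (dual ks) (phiB G)"
proof -
  obtain phiA and CA :: "nat list list set" and phiB where k: "inj_on phiA CA" "phiA ` CA = {is. length is = length ks - 1}"
   "inj_on phiB CA"
   "phiB ` CA = {iss. length iss = length (dual ks) \<and> (\<forall>m<length (dual ks). length (iss!m) = blocks_len (dual ks) m)}"
   "\<And>G. G \<in> CA \<Longrightarrow> sum_list (map sum_list (phiB G)) = sum_list (phiA G)"
   "\<And>G. G \<in> CA \<Longrightarrow> admissible (insert_ones ks (phiA G)) \<and> dual (insert_ones ks (phiA G)) = rhsmap (dual ks) (phiB G)"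
    by (rule key[OF assms]) (rule that; assumption)
  let ?tot = "\<lambda>G. sum_list (phiA G)"
  show ?thesis
  proof (rule that[of phiA CA ?tot phiB])
    fix f :: "nat list \<Rightarrow> complex" and i :: nat
    have eq: "{is. length is = length ks - 1 \<and> sum_list is = i} = {x \<in> {is. length is = length ks - 1}. sum_list x = i}"
      by blast
    have r: "(\<Sum>x\<in>{x \<in> {is. length is = length ks - 1}. sum_list x = i}. f (insert_ones ks x))
        = (\<Sum>c\<in>{c\<in>CA. ?tot c = i}. f (insert_ones ks (phiA c)))"
      by (rule reidx_sum[OF k(1) k(2)]) (rule refl)
    show "(\<Sum>is\<in>{is. length is = length ks - 1 \<and> sum_list is = i}. f (insert_ones ks is))
       = (\<Sum>G\<in>{G\<in>CA. ?tot G = i}. f (insert_ones ks (phiA G)))"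
      unfolding eq by (rule r)
  next
    fix f :: "nat list \<Rightarrow> complex" and i :: nat
    let ?B = "{iss. length iss = length (dual ks) \<and> (\<forall>m<length (dual ks). length (iss!m) = blocks_len (dual ks) m)}"
    have eq: "{iss. length iss = length (dual ks)
                        \<and> (\<forall>m<length (dual ks). length (iss ! m) = blocks_len (dual ks) m)
                        \<and> sum_list (map sum_list iss) = i} = {x \<in> ?B. sum_list (map sum_list x) = i}"
      by blast
    have r: "(\<Sum>x\<in>{x \<in> ?B. sum_list (map sum_list x) = i}. f (rhsmap (dual ks) x))
        = (\<Sum>c\<in>{c\<in>CA. ?tot c = i}. f (rhsmap (dual ks) (phiB c)))"
      by (rule reidx_sum[OF k(3) k(4)]) (rule k(5))
    have m: "map (\<lambda>m. dual ks ! m + sum_list (iss ! m)) [0..<length (dual ks)] = rhsmap (dual ks) iss" for iss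
      by (simp add: rhsmap_def)
    show "(\<Sum>iss\<in>{iss. length iss = length (dual ks)
                        \<and> (\<forall>m<length (dual ks). length (iss ! m) = blocks_len (dual ks) m)
                        \<and> sum_list (map sum_list iss) = i}. f (map (\<lambda>m. dual ks ! m + sum_list (iss ! m)) [0..<length (dual ks)]))
       = (\<Sum>G\<in>{G\<in>CA. ?tot G = i}. f (rhsmap (dual ks) (phiB G)))"
      unfolding eq m by (rule r)
  next
    fix G assume "G \<in> CA" thus "admissible (insert_ones ks (phiA G)) \<and> dual (insert_ones ks (phiA G)) = rhsmap (dual ks) (phiB G)"
      by (rule k(6))
  qed
qed

lemma insert_ones_zero: "ks \<noteq> [] \<Longrightarrow> insert_ones ks (replicate (length ks - 1) 0) = ks"
proof -
  assume ne: "ks \<noteq> []"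
  have a: "map (\<lambda>j. ks ! j # replicate (replicate (length ks - 1) 0 ! j) 1) [0..<length ks - 1] = map (\<lambda>j. [ks ! j]) [0..<length ks - 1]"
    by (rule map_cong) auto
  have b: "concat (map (\<lambda>j. [ks ! j]) [0..<length ks - 1]) = butlast ks"
    by (rule nth_equalityI) (auto simp: nth_butlast concat_map_singleton)
  have "insert_ones ks (replicate (length ks - 1) 0) = butlast ks @ [last ks]"
    unfolding insert_ones_def length_replicate a b ..
  thus ?thesis using ne by simp
qed

lemma zero_lhs: "ks \<noteq> [] \<Longrightarrow> (\<Sum>is\<in>{is. length is = length ks - 1 \<and> sum_list is = (0::nat)}. f (insert_ones ks is)) = f ks"
proof -
  assume ne: "ks \<noteq> []"
  have "{is. length is = length ks - 1 \<and> sum_list is = (0::nat)} = {replicate (length ks - 1) 0}"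
  proof (intro set_eqI iffI)
    fix x assume "x \<in> {is. length is = length ks - 1 \<and> sum_list is = (0::nat)}"
    hence "length x = length ks - 1" "\<forall>y\<in>set x. y = 0" by auto
    hence "replicate (length ks - 1) 0 = x" using replicate_length_same[of x 0] by simp
    thus "x \<in> {replicate (length ks - 1) 0}"
      by simp
  qed auto
  thus ?thesis using insert_ones_zero[OF ne] by simp
qed

lemma zero_rhs: "(\<Sum>iss\<in>{iss. length iss = length kd
                        \<and> (\<forall>m<length kd. length (iss ! m) = blocks_len kd m)
                        \<and> sum_list (map sum_list iss) = (0::nat)}. f (map (\<lambda>m. kd ! m + sum_list (iss ! m)) [0..<length kd])) = f kd"
proof -
  define w where "w = map (\<lambda>m. replicate (blocks_len kd m) (0::nat)) [0..<length kd]"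
  have "{iss. length iss = length kd
                        \<and> (\<forall>m<length kd. length (iss ! m) = blocks_len kd m)
                        \<and> sum_list (map sum_list iss) = (0::nat)} = {w}"
  proof (intro set_eqI iffI)
    fix x assume x: "x \<in> {iss. length iss = length kd
                        \<and> (\<forall>m<length kd. length (iss ! m) = blocks_len kd m)
                        \<and> sum_list (map sum_list iss) = (0::nat)}"
    have "x = w"
    proof (rule nth_equalityI)
      show "length x = length w" using x by (simp add: w_def)
    next
      fix m assume m: "m < length x"
      hence "x ! m \<in> set x" by simp
      with x have z: "\<forall>y\<in>set (x ! m). y = 0" by auto
      have "x ! m = replicate (length (x ! m)) 0" using replicate_length_same[OF z] by simp
      thus "x ! m = w ! m" using x m by (simp add: w_def)
    qed
    thus "x \<in> {w}" by simp
  next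
    fix x assume "x \<in> {w}"
    thus "x \<in> {iss. length iss = length kd
                        \<and> (\<forall>m<length kd. length (iss ! m) = blocks_len kd m)
                        \<and> sum_list (map sum_list iss) = (0::nat)}"
      by (auto simp: w_def)
  qed
  moreover have "map (\<lambda>m. kd ! m + sum_list (w ! m)) [0..<length kd] = kd"
    by (rule nth_equalityI) (auto simp: w_def)
  ultimately show ?thesis by simp
qed

lemma dirTP:
  assumes T: "\<forall>ks l (\<alpha>::complex). admissible ks \<and> Re \<alpha> > 0 \<longrightarrow> S l ks \<alpha> = S l (dual ks) \<alpha>"
    and a: "admissible ks" and r: "Re \<alpha> > 0"
  shows "P_lhs l ks \<alpha> = P_rhs l (dual ks) \<alpha>"
proof -
  obtain phiA and C :: "nat list list set" and tot phiB where sd: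
    "\<And>(f :: nat list \<Rightarrow> complex) i. (\<Sum>is\<in>{is. length is = length ks - 1 \<and> sum_list is = i}. f (insert_ones ks is))
     = (\<Sum>G\<in>{G\<in>C. tot G = i}. f (insert_ones ks (phiA G)))"
    "\<And>(f :: nat list \<Rightarrow> complex) i. (\<Sum>iss\<in>{iss. length iss = length (dual ks)
                      \<and> (\<forall>m<length (dual ks). length (iss ! m) = blocks_len (dual ks) m)
                      \<and> sum_list (map sum_list iss) = i}. f (map (\<lambda>m. dual ks ! m + sum_list (iss ! m)) [0..<length (dual ks)]))
     = (\<Sum>G\<in>{G\<in>C. tot G = i}. f (rhsmap (dual ks) (phiB G)))"
    "\<And>G. G \<in> C \<Longrightarrow> admissible (insert_ones ks (phiA G)) \<and> dual (insert_ones ks (phiA G)) = rhsmap (dual ks) (phiB G)"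
    using sides[OF a] by blast
  have L: "(\<Sum>is\<in>{is. length is = length ks - 1 \<and> sum_list is = i}. S (l - i) (insert_ones ks is) \<alpha>)
     = (\<Sum>G\<in>{G\<in>C. tot G = i}. S (l - i) (insert_ones ks (phiA G)) \<alpha>)" for i
    by (rule sd(1))
  have R: "(\<Sum>iss\<in>{iss. length iss = length (dual ks)
                      \<and> (\<forall>m<length (dual ks). length (iss ! m) = blocks_len (dual ks) m)
                      \<and> sum_list (map sum_list iss) = i}. S (l - i) (map (\<lambda>m. dual ks ! m + sum_list (iss ! m)) [0..<length (dual ks)]) \<alpha>)
     = (\<Sum>G\<in>{G\<in>C. tot G = i}. S (l - i) (rhsmap (dual ks) (phiB G)) \<alpha>)" for i
    by (rule sd(2))
  have M: "S (l - i) (insert_ones ks (phiA G)) \<alpha> = S (l - i) (rhsmap (dual ks) (phiB G)) \<alpha>" if "G \<in> C" for i G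
  proof -
    from sd(3)[OF that] have G: "admissible (insert_ones ks (phiA G))" "dual (insert_ones ks (phiA G)) = rhsmap (dual ks) (phiB G)"
      by auto
    from T have "admissible (insert_ones ks (phiA G)) \<and> Re \<alpha> > 0 \<longrightarrow> S (l - i) (insert_ones ks (phiA G)) \<alpha> = S (l - i) (dual (insert_ones ks (phiA G))) \<alpha>"
      by blast
    with G r show ?thesis by simp
  qed
  have "P_lhs l ks \<alpha> = (\<Sum>i=0..l. \<Sum>G\<in>{G\<in>C. tot G = i}. S (l - i) (insert_ones ks (phiA G)) \<alpha>)"
    unfolding P_lhs_def L ..
  also have "\<dots> = (\<Sum>i=0..l. \<Sum>G\<in>{G\<in>C. tot G = i}. S (l - i) (rhsmap (dual ks) (phiB G)) \<alpha>)"
    by (intro sum.cong refl M) simp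
  also have "\<dots> = P_rhs l (dual ks) \<alpha>"
    unfolding P_rhs_def R ..
  finally show ?thesis .
qed

lemma stepPT:
  assumes IH: "\<And>i ks'. i \<in> {1..l} \<Longrightarrow> admissible ks' \<Longrightarrow> S (l - i) ks' \<alpha> = S (l - i) (dual ks') \<alpha>"
    and a: "admissible ks"
    and P: "P_lhs l ks \<alpha> = P_rhs l (dual ks) \<alpha>"
  shows "S l ks \<alpha> = S l (dual ks) \<alpha>"
proof -
  obtain phiA and C :: "nat list list set" and tot phiB where sd:
    "\<And>(f :: nat list \<Rightarrow> complex) i. (\<Sum>is\<in>{is. length is = length ks - 1 \<and> sum_list is = i}. f (insert_ones ks is))
     = (\<Sum>G\<in>{G\<in>C. tot G = i}. f (insert_ones ks (phiA G)))"
    "\<And>(f :: nat list \<Rightarrow> complex) i. (\<Sum>iss\<in>{iss. length iss = length (dual ks)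
                      \<and> (\<forall>m<length (dual ks). length (iss ! m) = blocks_len (dual ks) m)
                      \<and> sum_list (map sum_list iss) = i}. f (map (\<lambda>m. dual ks ! m + sum_list (iss ! m)) [0..<length (dual ks)]))
     = (\<Sum>G\<in>{G\<in>C. tot G = i}. f (rhsmap (dual ks) (phiB G)))"
    "\<And>G. G \<in> C \<Longrightarrow> admissible (insert_ones ks (phiA G)) \<and> dual (insert_ones ks (phiA G)) = rhsmap (dual ks) (phiB G)"
    using sides[OF a] by blast
  define X where "X i = (\<Sum>is\<in>{is. length is = length ks - 1 \<and> sum_list is = i}. S (l - i) (insert_ones ks is) \<alpha>)" for i
  define Y where "Y i = (\<Sum>iss\<in>{iss. length iss = length (dual ks)
                      \<and> (\<forall>m<length (dual ks). length (iss ! m) = blocks_len (dual ks) m)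
                      \<and> sum_list (map sum_list iss) = i}. S (l - i) (map (\<lambda>m. dual ks ! m + sum_list (iss ! m)) [0..<length (dual ks)]) \<alpha>)" for i
  have XY: "X i = Y i" if i: "i \<in> {1..l}" for i
  proof -
    have "X i = (\<Sum>G\<in>{G\<in>C. tot G = i}. S (l - i) (insert_ones ks (phiA G)) \<alpha>)"
      unfolding X_def by (rule sd(1))
    also have "\<dots> = (\<Sum>G\<in>{G\<in>C. tot G = i}. S (l - i) (rhsmap (dual ks) (phiB G)) \<alpha>)"
    proof (rule sum.cong[OF refl])
      fix G assume "G \<in> {G\<in>C. tot G = i}"
      hence G: "admissible (insert_ones ks (phiA G))" "dual (insert_ones ks (phiA G)) = rhsmap (dual ks) (phiB G)"
        using sd(3) by auto
      show "S (l - i) (insert_ones ks (phiA G)) \<alpha> = S (l - i) (rhsmap (dual ks) (phiB G)) \<alpha>"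
        using IH[OF i G(1)] G(2) by simp
    qed
    also have "\<dots> = Y i" unfolding Y_def by (rule sd(2)[symmetric])
    finally show ?thesis .
  qed
  have ne: "ks \<noteq> []" using a by (simp add: admissible_def)
  have "(\<Sum>i=0..l. X i) = (\<Sum>i=0..l. Y i)"
    using P by (simp only: X_def Y_def P_lhs_def P_rhs_def)
  moreover have "{0..l} = insert 0 {1..l}" by auto
  ultimately have "X 0 + (\<Sum>i=1..l. X i) = Y 0 + (\<Sum>i=1..l. Y i)"
    by (metis (no_types) atLeastAtMost_iff finite_atLeastAtMost not_one_le_zero sum.insert)
  moreover have "(\<Sum>i=1..l. X i) = (\<Sum>i=1..l. Y i)" using XY by (rule sum.cong[OF refl])
  ultimately have "X 0 = Y 0" by simp
  moreover have "X 0 = S l ks \<alpha>" unfolding X_def using zero_lhs[OF ne, where f="\<lambda>x. S l x \<alpha>"] by simp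
  moreover have "Y 0 = S l (dual ks) \<alpha>" unfolding Y_def using zero_rhs[where kd="dual ks" and f="\<lambda>x. S l x \<alpha>"] by simp
  ultimately show ?thesis by simp
qed

theorem proposition2p9:
  shows "(\<forall>ks l (\<alpha>::complex). admissible ks \<and> Re \<alpha> > 0 \<longrightarrow> S l ks \<alpha> = S l (dual ks) \<alpha>)
     \<longleftrightarrow> (\<forall>ks l (\<alpha>::complex). admissible ks \<and> Re \<alpha> > 0 \<longrightarrow> P_lhs l ks \<alpha> = P_rhs l (dual ks) \<alpha>)"
proof
  assume T: "\<forall>ks l (\<alpha>::complex). admissible ks \<and> Re \<alpha> > 0 \<longrightarrow> S l ks \<alpha> = S l (dual ks) \<alpha>"
  show "\<forall>ks l (\<alpha>::complex). admissible ks \<and> Re \<alpha> > 0 \<longrightarrow> P_lhs l ks \<alpha> = P_rhs l (dual ks) \<alpha>"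
    using dirTP[OF T] by blast
next
  assume P: "\<forall>ks l (\<alpha>::complex). admissible ks \<and> Re \<alpha> > 0 \<longrightarrow> P_lhs l ks \<alpha> = P_rhs l (dual ks) \<alpha>"
  have "\<forall>ks (\<alpha>::complex). admissible ks \<and> Re \<alpha> > 0 \<longrightarrow> S l ks \<alpha> = S l (dual ks) \<alpha>" for l
  proof (induction l rule: less_induct)
    case (less l)
    show ?case
    proof (intro allI impI)
      fix ks and \<alpha> :: complex
      assume a: "admissible ks \<and> Re \<alpha> > 0"
      show "S l ks \<alpha> = S l (dual ks) \<alpha>"
      proof (rule stepPT)
        fix i ks' assume i: "i \<in> {1..l}" and ad: "admissible ks'"
        from i have "l - i < l" by auto
        hence "\<forall>ks (\<alpha>::complex). admissible ks \<and> Re \<alpha> > 0 \<longrightarrow> S (l - i) ks \<alpha> = S (l - i) (dual ks) \<alpha>"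
          by (rule less.IH)
        with ad a show "S (l - i) ks' \<alpha> = S (l - i) (dual ks') \<alpha>" by blast
      next
        show "admissible ks" using a by simp
      next
        show "P_lhs l ks \<alpha> = P_rhs l (dual ks) \<alpha>" using P a by blast
      qed
    qed
  qed
  thus "\<forall>ks l (\<alpha>::complex). admissible ks \<and> Re \<alpha> > 0 \<longrightarrow> S l ks \<alpha> = S l (dual ks) \<alpha>" by blast
qed

end
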